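(* Let $\mathbf S$ be a species and, for each $i\ge0$, let $a_i$ be the number of $\mathbf S$-structures on an $i$-element set. For integers $n,x\ge 0$ let $p_n(x)$ be the number of $\mathbf S$-enriched functions from an $n$-element set to an $x$-element set. Then, for all integers $n,x\ge0$, $$p_n(x)=\sum_{\lambda\vdash n}\binom{n}{\lambda}\,\frac{\prod_{i=1}^{\ell(\lambda)}a_{\lambda_i}}{\prod_{j\ge1}\mathrm{mult}_j(\lambda)!}\,(x)_{\ell(\lambda)}.$$
   Context: A species $\mathbf S$ is a functor from the category of finite sets and bijections to itself, with $|\mathbf S[\emptyset]|=1$ and $|\mathbf S[E]|\ge1$ whenever $|E|=1$. The number $a_i=|\mathbf S[E]|$ for $|E|=i$ depends only on $i$. An $\mathbf S$-enriched function from $N$ to $X$ is a pair $(f,(A_y)_{y\in X})$ where $f:N\to X$ and $A_y\in\mathbf S[f^{-1}(y)]$ for each $y\in X$. A partition $\lambda\vdash n$ is a nonincreasing, eventually zero sequence of nonnegative integers with sum $n$. Its length $\ell(\lambda)$ is its number of nonzero parts, and $\mathrm{mult}_j(\lambda)$ is the number of parts equal to $j$. We write $\binom{n}{\lambda}=n!/\prod_i\lambda_i!$ and $(x)_k=x(x-1)\cdots(x-k+1)$. *)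

theory Defs
  imports Complex_Main "HOL-Library.FuncSet"
begin

text \<open>A species on the label type 'a (which must be infinite so that every finite
cardinality occurs): S U is the set of S-structures on the finite set U, and
T U V sigma is the transport of structures along a bijection sigma : U -> V.
Morphisms are represented by HOL functions, identified when they agree on U.\<close>

definition species :: "('a set \<Rightarrow> 'b set) \<Rightarrow> ('a set \<Rightarrow> 'a set \<Rightarrow> ('a \<Rightarrow> 'a) \<Rightarrow> 'b \<Rightarrow> 'b) \<Rightarrow> bool" where
  "species S T \<longleftrightarrow>
     (\<forall>U. finite U \<longrightarrow> finite (S U)) \<and>
     (\<forall>U V \<sigma>. finite U \<and> bij_betw \<sigma> U V \<longrightarrow> (\<forall>s\<in>S U. T U V \<sigma> s \<in> S V)) \<and>
     (\<forall>U V \<sigma> \<sigma>'. finite U \<and> bij_betw \<sigma> U V \<and> (\<forall>x\<in>U. \<sigma> x = \<sigma>' x) \<longrightarrow>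
        (\<forall>s\<in>S U. T U V \<sigma> s = T U V \<sigma>' s)) \<and>
     (\<forall>U s. finite U \<and> s \<in> S U \<longrightarrow> T U U id s = s) \<and>
     (\<forall>U V W \<sigma> \<tau>. finite U \<and> bij_betw \<sigma> U V \<and> bij_betw \<tau> V W \<longrightarrow>
        (\<forall>s\<in>S U. T U W (\<tau> \<circ> \<sigma>) s = T V W \<tau> (T U V \<sigma> s))) \<and>
     card (S {}) = 1 \<and>
     (\<forall>U. finite U \<and> card U = 1 \<longrightarrow> card (S U) \<ge> 1)"

definition species_num :: "('a set \<Rightarrow> 'b set) \<Rightarrow> nat \<Rightarrow> nat" where
  "species_num S i = card (S (SOME U. finite U \<and> card U = i))"

definition enriched_functions :: "('a set \<Rightarrow> 'b set) \<Rightarrow> 'a set \<Rightarrow> 'c set \<Rightarrow> (('a \<Rightarrow> 'c) \<times> ('c \<Rightarrow> 'b)) set" where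
  "enriched_functions S N X =
     {(f, A). f \<in> N \<rightarrow>\<^sub>E X \<and> A \<in> (\<Pi>\<^sub>E y\<in>X. S {u\<in>N. f u = y})}"

text \<open>Partitions of n as nonincreasing sequences (parts indexed from 0); a partition
of n has at most n nonzero parts, so all entries from index n on vanish.\<close>
definition partitions :: "nat \<Rightarrow> (nat \<Rightarrow> nat) set" where
  "partitions n = {p. (\<forall>i. p (Suc i) \<le> p i) \<and> (\<forall>i\<ge>n. p i = 0) \<and> (\<Sum>i<n. p i) = n}"

definition part_len :: "(nat \<Rightarrow> nat) \<Rightarrow> nat" where
  "part_len p = card {i. p i \<noteq> 0}"

definition part_mult :: "(nat \<Rightarrow> nat) \<Rightarrow> nat \<Rightarrow> nat" where
  "part_mult p j = card {i. p i = j}"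

text \<open>Multinomial n!/prod_i lambda_i! (only the first n entries of p can be nonzero).\<close>
definition multinom :: "nat \<Rightarrow> (nat \<Rightarrow> nat) \<Rightarrow> nat" where
  "multinom n p = fact n div (\<Prod>i<n. fact (p i))"

definition falling :: "nat \<Rightarrow> nat \<Rightarrow> nat" where
  "falling x k = (\<Prod>i<k. (x - i))"

end

theory Submission
  imports Defs "HOL-Library.Multiset"
begin

lemma multinomial_count:
  fixes A :: "'a set" and B :: "'b set"
  assumes "finite B" "finite A" "(\<Sum>b\<in>B. m b) = card A"
  shows "card {f \<in> A \<rightarrow>\<^sub>E B. \<forall>b\<in>B. card {a\<in>A. f a = b} = m b} * (\<Prod>b\<in>B. fact (m b))
         = (fact (card A) :: nat)"
  using assms
proof (induction B arbitrary: A rule: finite_induct)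
  case empty
  then have "A = {}" by simp
  then show ?case by simp
next
  case (insert b B A)
  define k where "k = m b"
  define S where "S = (\<lambda>A'::'a set. {f \<in> A' \<rightarrow>\<^sub>E B. \<forall>b\<in>B. card {a\<in>A'. f a = b} = m b})"
  define T where "T = {f \<in> A \<rightarrow>\<^sub>E insert b B. \<forall>b'\<in>insert b B. card {a\<in>A. f a = b'} = m b'}"
  define Ks where "Ks = {K. K \<subseteq> A \<and> card K = k}"
  have sumB: "(\<Sum>b\<in>B. m b) = card A - k" and kle: "k \<le> card A"
    using insert by (auto simp: k_def)
  have fib: "card {f\<in>T. {a\<in>A. f a = b} = K} = card (S (A - K))" if K: "K \<in> Ks" for K
  proof -
    have KA: "K \<subseteq> A" and cK: "card K = k" using K by (auto simp: Ks_def)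
    have "bij_betw (\<lambda>g a. if a \<in> K then b else g a) (S (A-K)) {f\<in>T. {a\<in>A. f a = b} = K}"
    proof (rule bij_betwI[where g="\<lambda>f. restrict f (A-K)"])
      show "(\<lambda>g a. if a \<in> K then b else g a) \<in> S (A - K) \<rightarrow> {f \<in> T. {a \<in> A. f a = b} = K}"
      proof
        fix g assume g: "g \<in> S (A-K)"
        have gv: "\<And>a. a \<in> A - K \<Longrightarrow> g a \<in> B" and gu: "\<And>a. a \<notin> A - K \<Longrightarrow> g a = undefined"
          and gc: "\<And>b'. b' \<in> B \<Longrightarrow> card {a\<in>A-K. g a = b'} = m b'"
          using g by (auto simp: S_def PiE_def extensional_def)
        let ?h = "\<lambda>a. if a \<in> K then b else g a"
        have f1: "{a\<in>A. ?h a = b} = K" using KA gv insert(2) by auto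
        have f2: "{a\<in>A. ?h a = b'} = {a\<in>A-K. g a = b'}" if "b' \<in> B" for b'
          using that insert(2) by auto
        have "?h \<in> A \<rightarrow>\<^sub>E insert b B" using KA gv gu by (auto simp: PiE_def extensional_def)
        moreover have "\<forall>b'\<in>insert b B. card {a\<in>A. ?h a = b'} = m b'"
          using f1 f2 gc cK by (auto simp: k_def)
        ultimately show "?h \<in> {f \<in> T. {a \<in> A. f a = b} = K}" using f1 by (auto simp: T_def)
      qed
      show "(\<lambda>f. restrict f (A - K)) \<in> {f \<in> T. {a \<in> A. f a = b} = K} \<rightarrow> S (A - K)"
      proof
        fix f assume f: "f \<in> {f \<in> T. {a \<in> A. f a = b} = K}"
        then have fv: "\<And>a. a \<in> A \<Longrightarrow> f a \<in> insert b B" and fK: "{a \<in> A. f a = b} = K"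
          and fc: "\<And>b'. b' \<in> B \<Longrightarrow> card {a\<in>A. f a = b'} = m b'"
          by (auto simp: T_def PiE_def)
        have f2: "{a\<in>A-K. f a = b'} = {a\<in>A. f a = b'}" if "b' \<in> B" for b'
          using that insert(2) fK by auto
        have "restrict f (A-K) \<in> (A-K) \<rightarrow>\<^sub>E B" using fv fK by auto
        moreover have "{a\<in>A-K. restrict f (A-K) a = b'} = {a\<in>A-K. f a = b'}" for b'
          by auto
        ultimately show "restrict f (A-K) \<in> S (A-K)" using f2 fc by (simp add: S_def)
      qed
      show "restrict (\<lambda>a. if a \<in> K then b else g a) (A - K) = g" if "g \<in> S (A - K)" for g
        using that by (auto simp: S_def PiE_def extensional_def restrict_def fun_eq_iff)
      show "(\<lambda>a. if a \<in> K then b else restrict f (A - K) a) = f" if "f \<in> {f \<in> T. {a \<in> A. f a = b} = K}" for f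
        using that KA by (auto simp: T_def PiE_def extensional_def restrict_def fun_eq_iff)
    qed
    then show ?thesis by (simp add: bij_betw_same_card)
  qed
  have IH: "card (S (A - K)) * (\<Prod>b\<in>B. fact (m b)) = fact (card A - k)" if "K \<in> Ks" for K
  proof -
    have "K \<subseteq> A" "card K = k" using that by (auto simp: Ks_def)
    then have "card (A - K) = card A - k" using insert(4) by (simp add: card_Diff_subset finite_subset)
    then show ?thesis using insert.IH[of "A - K"] insert(4) sumB by (simp add: S_def)
  qed
  have T_eq: "T = (\<Union>K\<in>Ks. {f\<in>T. {a\<in>A. f a = b} = K})"
    by (auto simp: Ks_def T_def k_def)
  have finT: "finite T" unfolding T_def
    by (rule finite_subset[OF _ finite_PiE[of A "\<lambda>_. insert b B"]]) (use insert in auto)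
  have finKs: "finite Ks" using insert(4) by (auto simp: Ks_def)
  have "card T = (\<Sum>K\<in>Ks. card {f\<in>T. {a\<in>A. f a = b} = K})"
    by (subst T_eq, rule card_UN_disjoint) (use finKs finT in auto)
  then have "card T * (\<Prod>b\<in>B. fact (m b)) = (\<Sum>K\<in>Ks. fact (card A - k))"
    by (simp add: sum_distrib_right fib IH)
  also have "\<dots> = (card A choose k) * fact (card A - k)"
    using n_subsets[OF insert(4), of k] by (simp add: Ks_def)
  finally have "card T * (\<Prod>b\<in>B. fact (m b)) * fact k = fact (card A)"
    using binomial_fact_lemma[OF kle] by (simp add: algebra_simps)
  then show ?case using insert(1,2) by (simp add: T_def k_def algebra_simps)
qed

definition cms :: "'c set \<Rightarrow> ('c \<Rightarrow> nat) \<Rightarrow> nat multiset" where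
  "cms X c = filter_mset (\<lambda>k. 0 < k) (image_mset c (mset_set X))"

definition psi :: "nat multiset \<Rightarrow> nat \<Rightarrow> nat" where
  "psi M i = (if i < size M then rev (sorted_list_of_multiset M) ! i else 0)"

lemma cms_eq: "finite X \<Longrightarrow> cms X c = image_mset c (mset_set {y\<in>X. 0 < c y})"
  unfolding cms_def by (simp flip: image_mset_filter_mset_swap)

lemma size_cms: "finite X \<Longrightarrow> size (cms X c) = card {y\<in>X. 0 < c y}"
  by (simp add: cms_eq)

lemma count_image_mset_set: "finite X \<Longrightarrow> count (image_mset c (mset_set X)) j = card {y\<in>X. c y = j}"
proof (induction X rule: finite_induct)
  case empty then show ?case by simp
next
  case (insert y X)
  have "{y'\<in>insert y X. c y' = j} = (if c y = j then insert y {y'\<in>X. c y' = j} else {y'\<in>X. c y' = j})"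
    by auto
  then show ?case using insert by (auto simp: card_insert_if)
qed

lemma count_cms: "finite X \<Longrightarrow> 0 < j \<Longrightarrow> count (cms X c) j = card {y\<in>X. c y = j}"
  unfolding cms_def by (simp add: count_image_mset_set)

lemma prod_cms: "finite X \<Longrightarrow> g 0 = 1 \<Longrightarrow> (\<Prod>y\<in>X. g (c y)) = prod_mset (image_mset g (cms X c))"
proof -
  assume fX: "finite X" and g0: "g 0 = 1"
  have "(\<Prod>y\<in>X. g (c y)) = (\<Prod>y\<in>{y\<in>X. 0 < c y}. g (c y))"
    by (rule prod.mono_neutral_right) (use fX g0 in auto)
  also have "\<dots> = prod_mset (image_mset g (cms X c))"
    by (simp add: cms_eq fX prod_unfold_prod_mset image_mset.compositionality o_def)
  finally show ?thesis .
qed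

lemma sum_cms: "finite X \<Longrightarrow> (\<Sum>y\<in>X. c y) = sum_mset (cms X c)"
proof -
  assume fX: "finite X"
  have "(\<Sum>y\<in>X. c y) = (\<Sum>y\<in>{y\<in>X. 0 < c y}. c y)"
    by (rule sum.mono_neutral_right) (use fX in auto)
  also have "\<dots> = sum_mset (cms X c)"
    by (simp add: cms_eq fX sum_unfold_sum_mset)
  finally show ?thesis .
qed

lemma part_shape:
  assumes "p \<in> partitions n"
  shows "{i. p i \<noteq> 0} = {..<part_len p}" "part_len p \<le> n"
proof -
  have mono: "\<And>i. p (Suc i) \<le> p i" and z: "\<And>i. i \<ge> n \<Longrightarrow> p i = 0"
    using assms by (auto simp: partitions_def)
  define l where "l = (LEAST i. p i = 0)"
  have pl: "p l = 0" unfolding l_def by (rule LeastI[of _ n]) (use z in auto)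
  have ln: "l \<le> n" unfolding l_def by (rule Least_le) (use z in auto)
  have "p i \<noteq> 0 \<longleftrightarrow> i < l" for i
  proof
    assume "p i \<noteq> 0"
    show "i < l"
    proof (rule ccontr)
      assume "\<not> i < l"
      then have "p i \<le> p l" using lift_Suc_antimono_le[of p l i] mono by auto
      with pl \<open>p i \<noteq> 0\<close> show False by simp
    qed
  next
    assume "i < l" then show "p i \<noteq> 0" unfolding l_def using not_less_Least by blast
  qed
  then have eq: "{i. p i \<noteq> 0} = {..<l}" by auto
  have pl: "part_len p = l" using eq by (simp add: part_len_def)
  show "{i. p i \<noteq> 0} = {..<part_len p}" unfolding pl by (rule eq)
  show "part_len p \<le> n" unfolding pl by (rule ln)
qed

lemma part_le:
  assumes "p \<in> partitions n" shows "p i \<le> n"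
proof (cases "i < n")
  case True
  have "p i \<le> (\<Sum>i<n. p i)" by (rule member_le_sum) (use True in auto)
  then show ?thesis using assms by (simp add: partitions_def)
next
  case False then show ?thesis using assms by (simp add: partitions_def)
qed

lemma pms_eq:
  assumes "p \<in> partitions n"
  shows "cms {..<n} p = image_mset p (mset_set {..<part_len p})"
proof -
  note sh = part_shape(1)[OF assms] and ln = part_shape(2)[OF assms]
  have "{i\<in>{..<n}. 0 < p i} = {i. p i \<noteq> 0} \<inter> {..<n}" by auto
  also have "\<dots> = {..<part_len p} \<inter> {..<n}" by (simp only: sh)
  also have "\<dots> = {..<part_len p}" using ln by auto
  finally have "{i\<in>{..<n}. 0 < p i} = {..<part_len p}" .
  then show ?thesis by (simp add: cms_eq)
qed

lemma size_le_sum_mset: "(\<forall>k\<in>#M. 0 < (k::nat)) \<Longrightarrow> size M \<le> sum_mset M"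
  by (induction M) auto

lemma psi_pms:
  assumes "p \<in> partitions n"
  shows "psi (cms {..<n} p) = p"
proof
  fix i
  define l where "l = part_len p"
  have sh: "{i. p i \<noteq> 0} = {..<l}" using part_shape[OF assms] by (simp add: l_def)
  have mono: "\<And>i. p (Suc i) \<le> p i" using assms by (auto simp: partitions_def)
  have M: "cms {..<n} p = mset (map p [0..<l])"
    using pms_eq[OF assms] by (simp add: l_def atLeast0LessThan)
  have sz: "size (cms {..<n} p) = l" by (simp add: M)
  have anti: "p j \<le> p i" if "i \<le> j" for i j
    using lift_Suc_antimono_le[of p i j] mono that by blast
  have srt: "sorted (rev (map p [0..<l]))"
    unfolding sorted_rev_iff_nth_mono using anti by simp
  have "sorted_list_of_multiset (cms {..<n} p) = rev (map p [0..<l])"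
    unfolding M sorted_list_of_multiset_mset by (rule properties_for_sort) (use srt in auto)
  then have ps: "psi (cms {..<n} p) i = (if i < l then map p [0..<l] ! i else 0)"
    by (simp add: psi_def sz)
  show "psi (cms {..<n} p) i = p i"
  proof (cases "i < l")
    case True then show ?thesis using ps by simp
  next
    case False
    then have "i \<notin> {i. p i \<noteq> 0}" using sh by blast
    then show ?thesis using ps False by simp
  qed
qed

lemma psi_part:
  assumes pos: "\<forall>k\<in>#M. 0 < k" and sm: "sum_mset M = n"
  shows "psi M \<in> partitions n" "cms {..<n} (psi M) = M"
proof -
  define L where "L = sorted_list_of_multiset M"
  define l where "l = size M"
  have mL: "mset L = M" by (simp add: L_def)
  have lL: "length L = l" using size_mset[of L] mL by (simp add: l_def)
  have ln: "l \<le> n" using size_le_sum_mset[OF pos] sm by (simp add: l_def)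
  have srt: "sorted L" by (simp add: L_def)
  have psi_eq: "psi M i = (if i < l then rev L ! i else 0)" for i
    by (simp add: psi_def L_def l_def)
  have posL: "i < l \<Longrightarrow> 0 < rev L ! i" for i
  proof -
    assume "i < l"
    then have "rev L ! i \<in> set (rev L)" using lL by (intro nth_mem) simp
    then have "rev L ! i \<in># M" using mL by (simp flip: set_mset_mset)
    then show ?thesis using pos by blast
  qed
  have mono: "psi M (Suc i) \<le> psi M i" for i
  proof (cases "Suc i < l")
    case True
    have "L ! (l - Suc (Suc i)) \<le> L ! (l - Suc i)"
      by (rule sorted_nth_mono[OF srt]) (use True lL in auto)
    then show ?thesis using True lL by (simp add: psi_eq rev_nth)
  next
    case False then show ?thesis by (simp add: psi_eq)
  qed
  have z: "i \<ge> n \<Longrightarrow> psi M i = 0" for i using ln by (simp add: psi_eq)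
  have "(\<Sum>i<n. psi M i) = (\<Sum>i<l. psi M i)"
    by (rule sum.mono_neutral_right) (use ln in \<open>auto simp: psi_eq\<close>)
  also have "\<dots> = (\<Sum>i<l. rev L ! i)" by (simp add: psi_eq)
  also have "\<dots> = sum_list (rev L)" by (simp add: sum_list_sum_nth lL atLeast0LessThan)
  also have "\<dots> = sum_list L" by simp
  also have "\<dots> = n" using sum_mset_sum_list[of L] mL sm by simp
  finally have "(\<Sum>i<n. psi M i) = n" .
  then show P: "psi M \<in> partitions n" using mono z by (simp add: partitions_def)
  have "{i. psi M i \<noteq> 0} = {..<l}" using posL by (auto simp: psi_eq)
  then have "part_len (psi M) = l" by (simp add: part_len_def)
  then have "cms {..<n} (psi M) = mset (map (psi M) [0..<l])"
    using pms_eq[OF P] by (simp add: atLeast0LessThan)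
  moreover have "map (psi M) [0..<l] = rev L"
    by (rule nth_equalityI) (auto simp: psi_eq lL)
  ultimately have "cms {..<n} (psi M) = mset (rev L)" by simp
  then show "cms {..<n} (psi M) = M" using mL by (simp only: mset_rev)
qed

lemma falling_fact: "l \<le> x \<Longrightarrow> falling x l * fact (x - l) = fact x"
proof (induction l)
  case 0 then show ?case by (simp add: falling_def)
next
  case (Suc l)
  define k where "k = x - Suc l"
  have xl: "x - l = Suc k" using Suc.prems by (simp add: k_def)
  have "fact (x - l) = (x - l) * fact (x - Suc l)"
    unfolding xl by (simp add: k_def)
  moreover have "falling x (Suc l) = falling x l * (x - l)" by (simp add: falling_def)
  moreover have "falling x l * fact (x - l) = fact x" using Suc by simp
  ultimately show ?case by (metis mult.assoc)
qed

lemma falling_zero: "x < l \<Longrightarrow> falling x l = 0"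
  unfolding falling_def by (rule prod_zero) auto

lemma fiber_sum:
  assumes "finite A" "finite B" "f ` A \<subseteq> B"
  shows "(\<Sum>b\<in>B. card {a\<in>A. f a = b}) = card A"
  using sum.group[OF assms, of "\<lambda>_. 1::nat"] by simp

lemma species_card_le:
  assumes sp: "species S T" and U: "finite U" and V: "finite V" and c: "card U = card V"
  shows "card (S U) \<le> card (S V)"
proof -
  obtain \<sigma> where \<sigma>: "bij_betw \<sigma> U V" using finite_same_card_bij[OF U V c] by blast
  define \<sigma>' where "\<sigma>' = the_inv_into U \<sigma>"
  have \<sigma>': "bij_betw \<sigma>' V U" using bij_betw_the_inv_into[OF \<sigma>] by (simp add: \<sigma>'_def)
  have inv: "\<sigma>' (\<sigma> u) = u" if "u \<in> U" for u
    using the_inv_into_f_f[OF bij_betw_imp_inj_on[OF \<sigma>] that] by (simp add: \<sigma>'_def)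
  have idc: "bij_betw (\<sigma>' \<circ> \<sigma>) U U" using bij_betw_trans[OF \<sigma> \<sigma>'] .
  note sd = sp[unfolded species_def]
  note tr0 = sd[THEN conjunct2, THEN conjunct1]
  note cong0 = sd[THEN conjunct2, THEN conjunct2, THEN conjunct1]
  note id0 = sd[THEN conjunct2, THEN conjunct2, THEN conjunct2, THEN conjunct1]
  note comp0 = sd[THEN conjunct2, THEN conjunct2, THEN conjunct2, THEN conjunct2, THEN conjunct1]
  note fin0 = sd[THEN conjunct1]
  have tr: "\<And>U V \<sigma>. finite U \<Longrightarrow> bij_betw \<sigma> U V \<Longrightarrow> s \<in> S U \<Longrightarrow> T U V \<sigma> s \<in> S V" for s
    using tr0 by blast
  have cong: "\<And>U V \<sigma> \<sigma>'. finite U \<Longrightarrow> bij_betw \<sigma> U V \<Longrightarrow> (\<forall>x\<in>U. \<sigma> x = \<sigma>' x) \<Longrightarrow> s \<in> S U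
      \<Longrightarrow> T U V \<sigma> s = T U V \<sigma>' s" for s
    using cong0 by blast
  have idl: "\<And>U. finite U \<Longrightarrow> s \<in> S U \<Longrightarrow> T U U id s = s" for s
    using id0 by blast
  have comp: "\<And>U V W \<sigma> \<tau>. finite U \<Longrightarrow> bij_betw \<sigma> U V \<Longrightarrow> bij_betw \<tau> V W \<Longrightarrow> s \<in> S U
      \<Longrightarrow> T U W (\<tau> \<circ> \<sigma>) s = T V W \<tau> (T U V \<sigma> s)" for s
    using comp0 by blast
  have finSV: "finite (S V)" using fin0 V by blast
  have bck: "T V U \<sigma>' (T U V \<sigma> s) = s" if s: "s \<in> S U" for s
  proof -
    have "T V U \<sigma>' (T U V \<sigma> s) = T U U (\<sigma>' \<circ> \<sigma>) s" using comp[OF U \<sigma> \<sigma>' s] by simp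
    also have "\<dots> = T U U id s" by (rule cong[OF U idc _ s]) (simp add: inv)
    also have "\<dots> = s" by (rule idl[OF U s])
    finally show ?thesis .
  qed
  have inj: "inj_on (T U V \<sigma>) (S U)" by (rule inj_on_inverseI[where g="T V U \<sigma>'"]) (rule bck)
  have sub: "T U V \<sigma> ` S U \<subseteq> S V" using tr[OF U \<sigma>] by blast
  show ?thesis by (rule card_inj_on_le[OF inj sub finSV])
qed

lemma species_num_card:
  fixes U :: "'a set"
  assumes sp: "species S T" and U: "finite U"
  shows "card (S U) = species_num S (card U)"
proof -
  define U0 where "U0 = (SOME V::'a set. finite V \<and> card V = card U)"
  have "finite U0 \<and> card U0 = card U" unfolding U0_def by (rule someI_ex) (use U in blast)
  then have U0: "finite U0" "card U0 = card U" by auto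
  have "card (S U) = card (S U0)"
    using species_card_le[OF sp U U0(1)] species_card_le[OF sp U0(1) U] U0 by simp
  then show ?thesis by (simp add: species_num_def U0_def)
qed

theorem mainTheorem2:
  fixes S :: "'a set \<Rightarrow> 'b set"
    and T :: "'a set \<Rightarrow> 'a set \<Rightarrow> ('a \<Rightarrow> 'a) \<Rightarrow> 'b \<Rightarrow> 'b"
    and N :: "'a set" and X :: "'c set" and n x :: nat
  assumes "infinite (UNIV :: 'a set)"
    and "species S T"
    and "finite N" and "card N = n"
    and "finite X" and "card X = x"
  shows "real (card (enriched_functions S N X)) =
    (\<Sum>p\<in>partitions n.
        real (multinom n p) *
        (real (\<Prod>i<part_len p. species_num S (p i)) /
         real (\<Prod>j\<in>{1..n}. (fact (part_mult p j) :: nat))) *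
        real (falling x (part_len p)))"
proof -
  note sp = assms(2) and finN = assms(3) and cN = assms(4) and finX = assms(5) and cX = assms(6)
  define a where "a = species_num S"
  have a_card: "\<And>U. finite U \<Longrightarrow> card (S U) = a (card U)"
    using species_num_card[OF sp] by (simp add: a_def)
  note sd = sp[unfolded species_def]
  have finS: "\<And>U. finite U \<Longrightarrow> finite (S U)" using sd[THEN conjunct1] by blast
  have "card (S {}) = 1"
    using sd[THEN conjunct2, THEN conjunct2, THEN conjunct2, THEN conjunct2, THEN conjunct2, THEN conjunct1] .
  then have a0: "a 0 = 1" using a_card[of "{}"] by simp
  define F where "F = N \<rightarrow>\<^sub>E X"
  have finF: "finite F" using finN finX by (simp add: F_def finite_PiE)
  have E: "enriched_functions S N X = Sigma F (\<lambda>f. PiE X (\<lambda>y. S {u\<in>N. f u = y}))"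
    by (auto simp: enriched_functions_def F_def)
  have step1: "card (enriched_functions S N X) = (\<Sum>f\<in>F. \<Prod>y\<in>X. a (card {u\<in>N. f u = y}))"
  proof -
    have "card (enriched_functions S N X) = (\<Sum>f\<in>F. card (PiE X (\<lambda>y. S {u\<in>N. f u = y})))"
      unfolding E by (rule card_SigmaI[OF finF]) (use finX finN finS in \<open>auto intro!: finite_PiE\<close>)
    also have "\<dots> = (\<Sum>f\<in>F. \<Prod>y\<in>X. a (card {u\<in>N. f u = y}))"
      by (rule sum.cong[OF refl]) (simp add: card_PiE finX a_card finN)
    finally show ?thesis .
  qed
  define C where "C = {c \<in> X \<rightarrow>\<^sub>E {0..n}. sum c X = n}"
  have finC: "finite C"
    by (rule finite_subset[of _ "X \<rightarrow>\<^sub>E {0..n}"]) (auto simp: C_def finX finite_PiE)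
  have fibsum: "(\<Sum>y\<in>X. card {u\<in>N. f u = y}) = n" if "f \<in> F" for f
    using fiber_sum[OF finN finX, of f] that cN by (auto simp: F_def)
  define fv where "fv f = restrict (\<lambda>y. card {u\<in>N. f u = y}) X" for f
  have fvC: "fv ` F \<subseteq> C"
  proof
    fix c assume "c \<in> fv ` F"
    then obtain f where f: "f \<in> F" and c: "c = fv f" by blast
    have "card {u\<in>N. f u = y} \<le> n" for y using card_mono[OF finN, of "{u\<in>N. f u = y}"] cN by auto
    then have "c \<in> X \<rightarrow>\<^sub>E {0..n}" by (auto simp: c fv_def)
    moreover have "sum c X = n" using fibsum[OF f] by (simp add: c fv_def)
    ultimately show "c \<in> C" by (simp add: C_def)
  qed
  define cnt where "cnt c = card {f\<in>F. \<forall>y\<in>X. card {u\<in>N. f u = y} = c y}" for c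
  define w where "w c = cnt c * (\<Prod>y\<in>X. a (c y))" for c
  have step2: "(\<Sum>f\<in>F. \<Prod>y\<in>X. a (card {u\<in>N. f u = y})) = (\<Sum>c\<in>C. w c)"
  proof -
    have "(\<Sum>f\<in>F. \<Prod>y\<in>X. a (card {u\<in>N. f u = y}))
        = (\<Sum>c\<in>C. \<Sum>f\<in>{f. f \<in> F \<and> fv f = c}. \<Prod>y\<in>X. a (card {u\<in>N. f u = y}))"
      by (rule sum.group[OF finF finC fvC, symmetric])
    also have "\<dots> = (\<Sum>c\<in>C. w c)"
    proof (rule sum.cong[OF refl])
      fix c assume c: "c \<in> C"
      then have cext: "c \<in> extensional X" by (auto simp: C_def PiE_def)
      have eqs: "{f. f \<in> F \<and> fv f = c} = {f\<in>F. \<forall>y\<in>X. card {u\<in>N. f u = y} = c y}"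
      proof (intro set_eqI iffI)
        fix f assume "f \<in> {f. f \<in> F \<and> fv f = c}"
        then show "f \<in> {f\<in>F. \<forall>y\<in>X. card {u\<in>N. f u = y} = c y}" by (auto simp: fv_def)
      next
        fix f assume f: "f \<in> {f\<in>F. \<forall>y\<in>X. card {u\<in>N. f u = y} = c y}"
        have "fv f = c"
        proof
          fix y show "fv f y = c y" using f cext by (cases "y \<in> X") (auto simp: fv_def extensional_def)
        qed
        then show "f \<in> {f. f \<in> F \<and> fv f = c}" using f by simp
      qed
      have "(\<Sum>f\<in>{f. f \<in> F \<and> fv f = c}. \<Prod>y\<in>X. a (card {u\<in>N. f u = y}))
          = (\<Sum>f\<in>{f\<in>F. \<forall>y\<in>X. card {u\<in>N. f u = y} = c y}. \<Prod>y\<in>X. a (c y))"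
        unfolding eqs by (rule sum.cong[OF refl]) simp
      also have "\<dots> = w c" by (simp add: w_def cnt_def)
      finally show "(\<Sum>f\<in>{f. f \<in> F \<and> fv f = c}. \<Prod>y\<in>X. a (card {u\<in>N. f u = y})) = w c" .
    qed
    finally show ?thesis .
  qed
  define P where "P = partitions n"
  have finP: "finite P"
  proof (rule finite_subset)
    show "P \<subseteq> (\<lambda>g i. if i < n then g i else 0) ` ({..<n} \<rightarrow>\<^sub>E {0..n})"
    proof
      fix p assume p: "p \<in> P"
      then have pP: "p \<in> partitions n" by (simp add: P_def)
      have "p = (\<lambda>i. if i < n then restrict p {..<n} i else 0)"
        using pP by (auto simp: partitions_def fun_eq_iff)
      moreover have "restrict p {..<n} \<in> {..<n} \<rightarrow>\<^sub>E {0..n}" using part_le[OF pP] by auto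
      ultimately show "p \<in> (\<lambda>g i. if i < n then g i else 0) ` ({..<n} \<rightarrow>\<^sub>E {0..n})" by blast
    qed
  qed (simp add: finite_PiE)
  define \<pi> where "\<pi> c = psi (cms X c)" for c
  have \<pi>props: "\<pi> c \<in> P \<and> cms {..<n} (\<pi> c) = cms X c" if c: "c \<in> C" for c
  proof -
    have pos: "\<forall>k\<in>#cms X c. 0 < k" by (simp add: cms_def)
    have sm: "sum_mset (cms X c) = n" using c sum_cms[OF finX, of c] by (simp add: C_def)
    show ?thesis using psi_part[OF pos sm] by (simp add: \<pi>_def P_def)
  qed
  have \<pi>C: "\<pi> ` C \<subseteq> P" using \<pi>props by blast
  have step3: "(\<Sum>c\<in>C. w c) = (\<Sum>p\<in>P. \<Sum>c\<in>{c. c \<in> C \<and> \<pi> c = p}. w c)"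
    by (rule sum.group[OF finC finP \<pi>C, symmetric])
  have step4: "real (\<Sum>c\<in>{c. c \<in> C \<and> \<pi> c = p}. w c) =
        real (multinom n p) *
        (real (\<Prod>i<part_len p. species_num S (p i)) /
         real (\<Prod>j\<in>{1..n}. (fact (part_mult p j) :: nat))) *
        real (falling x (part_len p))" if pPP: "p \<in> P" for p
  proof -
    have pP: "p \<in> partitions n" using pPP by (simp add: P_def)
    define l where "l = part_len p"
    define PM where "PM = (\<Prod>j\<in>{1..n}. (fact (part_mult p j) :: nat))"
    define PA where "PA = (\<Prod>i<l. a (p i))"
    define Q where "Q = cms {..<n} p"
    have Qeq: "Q = image_mset p (mset_set {..<l})" using pms_eq[OF pP] by (simp add: Q_def l_def)
    have sizeQ: "size Q = l" by (simp add: Qeq)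
    have setc: "{c. c \<in> C \<and> \<pi> c = p} = {c\<in>C. cms X c = Q}"
    proof (intro set_eqI iffI)
      fix c assume "c \<in> {c. c \<in> C \<and> \<pi> c = p}"
      then show "c \<in> {c\<in>C. cms X c = Q}" using \<pi>props[of c] by (auto simp: Q_def)
    next
      fix c assume "c \<in> {c\<in>C. cms X c = Q}"
      then show "c \<in> {c. c \<in> C \<and> \<pi> c = p}" using psi_pms[OF pP] by (auto simp: Q_def \<pi>_def)
    qed
    have PA_eq: "PA = prod_mset (image_mset a Q)"
      by (simp add: PA_def Qeq prod_unfold_prod_mset image_mset.compositionality o_def)
    have multi: "multinom n p = fact n div prod_mset (image_mset fact Q)"
      using prod_cms[of "{..<n}" "fact :: nat \<Rightarrow> nat" p] by (simp add: multinom_def Q_def)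
    have wc: "w c = multinom n p * PA" if c: "c \<in> C" "cms X c = Q" for c
    proof -
      have sc: "(\<Sum>y\<in>X. c y) = card N" using c cN by (simp add: C_def)
      have "cnt c * (\<Prod>y\<in>X. fact (c y)) = fact n"
        using multinomial_count[OF finX finN sc] cN by (simp add: cnt_def F_def)
      moreover have "(\<Prod>y\<in>X. fact (c y)) = (prod_mset (image_mset fact Q) :: nat)"
        using prod_cms[OF finX, of "fact :: nat \<Rightarrow> nat" c] c by simp
      moreover have "prod_mset (image_mset fact Q) \<noteq> (0::nat)"
        by (auto simp: prod_mset_zero_iff)
      ultimately have cq: "cnt c * prod_mset (image_mset fact Q) = fact n"
        and qpos: "prod_mset (image_mset fact Q) \<noteq> (0::nat)" by simp_all
      have "cnt c = cnt c * prod_mset (image_mset fact Q) div prod_mset (image_mset fact Q)"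
        using qpos by simp
      then have "cnt c = multinom n p" using multi cq by simp
      moreover have "(\<Prod>y\<in>X. a (c y)) = PA"
        using prod_cms[OF finX, of a c, OF a0] c PA_eq by simp
      ultimately show ?thesis by (simp add: w_def)
    qed
    have sum_eq: "(\<Sum>c\<in>{c. c \<in> C \<and> \<pi> c = p}. w c) = card {c\<in>C. cms X c = Q} * (multinom n p * PA)"
      unfolding setc using wc by simp
    have cnt_pms: "count Q j = part_mult p j" if "0 < j" for j
    proof -
      have "count Q j = card {i\<in>{..<n}. p i = j}" using count_cms[of "{..<n}" j p] that by (simp add: Q_def)
      also have "{i\<in>{..<n}. p i = j} = {i. p i = j}"
        using pP that by (auto simp: partitions_def) (metis leI less_irrefl)
      finally show ?thesis by (simp add: part_mult_def)
    qed
    have cntC: "card {c\<in>C. cms X c = Q} * PM = falling x l"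
    proof (cases "l \<le> x")
      case True
      define m where "m j = (if j = 0 then x - l else count Q j)" for j
      have setEq: "{c\<in>C. cms X c = Q} = {c \<in> X \<rightarrow>\<^sub>E {0..n}. \<forall>j\<in>{0..n}. card {y\<in>X. c y = j} = m j}"
      proof (intro set_eqI iffI)
        fix c assume "c \<in> {c\<in>C. cms X c = Q}"
        then have cC: "c \<in> X \<rightarrow>\<^sub>E {0..n}" and cQ: "cms X c = Q" by (auto simp: C_def)
        have "card {y\<in>X. c y = j} = m j" if "j \<in> {0..n}" for j
        proof (cases "j = 0")
          case True
          have "{y\<in>X. c y = 0} = X - {y\<in>X. 0 < c y}" by auto
          then have "card {y\<in>X. c y = 0} = x - card {y\<in>X. 0 < c y}"
            by (simp add: card_Diff_subset finX cX)
          also have "card {y\<in>X. 0 < c y} = l" using size_cms[OF finX, of c] cQ sizeQ by simp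
          finally show ?thesis using True by (simp add: m_def)
        next
          case False
          then show ?thesis using count_cms[OF finX, of j c] cQ by (simp add: m_def)
        qed
        then show "c \<in> {c \<in> X \<rightarrow>\<^sub>E {0..n}. \<forall>j\<in>{0..n}. card {y\<in>X. c y = j} = m j}" using cC by simp
      next
        fix c assume "c \<in> {c \<in> X \<rightarrow>\<^sub>E {0..n}. \<forall>j\<in>{0..n}. card {y\<in>X. c y = j} = m j}"
        then have cC: "c \<in> X \<rightarrow>\<^sub>E {0..n}" and cm: "\<And>j. j \<in> {0..n} \<Longrightarrow> card {y\<in>X. c y = j} = m j"
          by auto
        have cQ: "cms X c = Q"
        proof (rule multiset_eqI)
          fix j
          show "count (cms X c) j = count Q j"
          proof (cases "j = 0")
            case True then show ?thesis by (simp add: cms_def Q_def)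
          next
            case False
            show ?thesis
            proof (cases "j \<le> n")
              case True
              then show ?thesis using cm[of j] False count_cms[OF finX, of j c] by (simp add: m_def)
            next
              case jn: False
              have e1: "{y\<in>X. c y = j} = {}" using cC jn by fastforce
              have "count (cms X c) j = card {y\<in>X. c y = j}" using count_cms[OF finX, of j c] False by simp
              also have "\<dots> = 0" unfolding e1 by simp
              finally have c1: "count (cms X c) j = 0" .
              have e2: "{i\<in>{..<n}. p i = j} = {}" using part_le[OF pP] jn by fastforce
              have "count Q j = card {i\<in>{..<n}. p i = j}" using count_cms[of "{..<n}" j p] False by (simp add: Q_def)
              also have "\<dots> = 0" unfolding e2 by simp
              finally have "count Q j = 0" .
              with c1 show ?thesis by simp
            qed
          qed
        qed
        have "sum c X = sum_mset (cms X c)" using sum_cms[OF finX] by simp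
        also have "\<dots> = sum_mset Q" using cQ by simp
        also have "\<dots> = (\<Sum>i<n. p i)" using sum_cms[of "{..<n}" p] by (simp add: Q_def)
        also have "\<dots> = n" using pP by (simp add: partitions_def)
        finally have "sum c X = n" .
        then show "c \<in> {c\<in>C. cms X c = Q}" using cC cQ by (simp add: C_def)
      qed
      have s0: "{0..n} = insert 0 {1..n}" by auto
      have D: "(\<Sum>j\<in>{1..n}. card {i\<in>{i\<in>{..<n}. 0 < p i}. p i = j}) = card {i\<in>{..<n}. 0 < p i}"
        by (rule fiber_sum) (use part_le[OF pP] in \<open>auto simp: Suc_le_eq\<close>)
      have "(\<Sum>j\<in>{1..n}. count Q j) = (\<Sum>j\<in>{1..n}. card {i\<in>{i\<in>{..<n}. 0 < p i}. p i = j})"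
      proof (rule sum.cong[OF refl])
        fix j assume "j \<in> {1..n}"
        then have j: "0 < j" by simp
        have "{i\<in>{i\<in>{..<n}. 0 < p i}. p i = j} = {i\<in>{..<n}. p i = j}" using j by auto
        then show "count Q j = card {i\<in>{i\<in>{..<n}. 0 < p i}. p i = j}"
          using count_cms[of "{..<n}" j p] j by (simp add: Q_def)
      qed
      also have "\<dots> = l" using D size_cms[of "{..<n}" p] sizeQ by (simp add: Q_def)
      finally have sQ: "(\<Sum>j\<in>{1..n}. count Q j) = l" .
      have summ: "(\<Sum>j\<in>{0..n}. m j) = card X"
      proof -
        have "(\<Sum>j\<in>{0..n}. m j) = m 0 + (\<Sum>j\<in>{1..n}. m j)" unfolding s0 by (simp add: sum.insert)
        also have "(\<Sum>j\<in>{1..n}. m j) = (\<Sum>j\<in>{1..n}. count Q j)" by (rule sum.cong) (auto simp: m_def)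
        finally show ?thesis using sQ True cX by (simp add: m_def)
      qed
      have prodm: "(\<Prod>j\<in>{0..n}. fact (m j)) = fact (x - l) * PM"
      proof -
        have "(\<Prod>j\<in>{0..n}. fact (m j)) = fact (m 0) * (\<Prod>j\<in>{1..n}. fact (m j))"
          unfolding s0 by (simp add: prod.insert)
        also have "(\<Prod>j\<in>{1..n}. fact (m j)) = PM"
          unfolding PM_def by (rule prod.cong) (auto simp: m_def cnt_pms)
        finally show ?thesis by (simp add: m_def)
      qed
      have "card {c\<in>C. cms X c = Q} * (fact (x - l) * PM) = fact x"
        using multinomial_count[OF _ finX summ] prodm cX setEq by simp
      then have "card {c\<in>C. cms X c = Q} * PM * fact (x - l) = falling x l * fact (x - l)"
        using falling_fact[OF True] by (simp add: algebra_simps)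
      then show ?thesis by simp
    next
      case False
      have e: "{c\<in>C. cms X c = Q} = {}"
      proof (rule ccontr)
        assume "{c\<in>C. cms X c = Q} \<noteq> {}"
        then obtain c where "cms X c = Q" by auto
        then have "l = card {y\<in>X. 0 < c y}" using size_cms[OF finX, of c] sizeQ by simp
        also have "\<dots> \<le> x" using card_mono[OF finX, of "{y\<in>X. 0 < c y}"] cX by auto
        finally show False using False by simp
      qed
      show ?thesis unfolding e using falling_zero[of x l] False by simp
    qed
    have PMpos: "PM > 0" by (simp add: PM_def)
    have "real (\<Sum>c\<in>{c. c \<in> C \<and> \<pi> c = p}. w c) = real (card {c\<in>C. cms X c = Q}) * real (multinom n p) * real PA"
      by (simp add: sum_eq)
    also have "real (card {c\<in>C. cms X c = Q}) = real (falling x l) / real PM"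
      using cntC PMpos by (simp add: field_simps flip: of_nat_mult)
    finally show ?thesis by (simp add: PA_def PM_def l_def a_def)
  qed
  have "real (card (enriched_functions S N X)) = real (\<Sum>p\<in>P. \<Sum>c\<in>{c. c \<in> C \<and> \<pi> c = p}. w c)"
    using step1 step2 step3 by simp
  also have "\<dots> = (\<Sum>p\<in>P. real (\<Sum>c\<in>{c. c \<in> C \<and> \<pi> c = p}. w c))" by simp
  also have "\<dots> = (\<Sum>p\<in>partitions n.
        real (multinom n p) *
        (real (\<Prod>i<part_len p. species_num S (p i)) /
         real (\<Prod>j\<in>{1..n}. (fact (part_mult p j) :: nat))) *
        real (falling x (part_len p)))"
    unfolding P_def by (rule sum.cong[OF refl]) (rule step4, simp add: P_def)
  finally show ?thesis .
qed

end
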